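(* Let $D=(-\pi/2,\pi/2)\times(-\pi/2,\pi/2)\subset\mathbb{R}^2$. Let $L$ be the space of functions $u:\overline D\to\mathbb{R}$ such that each $u$ is $C^\infty$ on some open set containing $\overline D$ and vanishes on $\partial D$. Then there exist $u,v\in L$ with $v\neq u$ and $v\neq -u$ such that $$u\,\Delta u=v\,\Delta v\quad\text{in } D.$$ In other words, for some continuous function $g$ on $\overline D$, the Dirichlet problem $$u\,\Delta u=g\ \text{in } D,\qquad u=0\ \text{on } \partial D$$ has more than two solutions in $L$.
   Context: $\Delta=\partial^2/\partial x^2+\partial^2/\partial y^2$ is the Laplacian, and $\partial D$ is the boundary of the square $D$. *)

theory Defs
  imports "HOL-Analysis.Analysis"
begin

definition sqD :: "(real \<times> real) set" where
  "sqD = {-pi/2<..<pi/2} \<times> {-pi/2<..<pi/2}"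

definition partial_x :: "(real \<times> real \<Rightarrow> real) \<Rightarrow> real \<times> real \<Rightarrow> real" where
  "partial_x f p = deriv (\<lambda>s. f (s, snd p)) (fst p)"

definition partial_y :: "(real \<times> real \<Rightarrow> real) \<Rightarrow> real \<times> real \<Rightarrow> real" where
  "partial_y f p = deriv (\<lambda>t. f (fst p, t)) (snd p)"

text \<open>Iterated partial derivative; True = d/dx, False = d/dy (applied right to left).\<close>
fun iter_partial :: "bool list \<Rightarrow> (real \<times> real \<Rightarrow> real) \<Rightarrow> real \<times> real \<Rightarrow> real" where
  "iter_partial [] f = f"
| "iter_partial (b # bs) f = (if b then partial_x else partial_y) (iter_partial bs f)"

definition smooth_on :: "(real \<times> real) set \<Rightarrow> (real \<times> real \<Rightarrow> real) \<Rightarrow> bool" where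
  "smooth_on S f \<longleftrightarrow>
     (\<forall>bs. continuous_on S (iter_partial bs f) \<and>
        (\<forall>p\<in>S. (\<lambda>s. iter_partial bs f (s, snd p)) differentiable (at (fst p)) \<and>
               (\<lambda>t. iter_partial bs f (fst p, t)) differentiable (at (snd p))))"

definition laplacian :: "(real \<times> real \<Rightarrow> real) \<Rightarrow> real \<times> real \<Rightarrow> real" where
  "laplacian u p = partial_x (partial_x u) p + partial_y (partial_y u) p"

definition in_L :: "(real \<times> real \<Rightarrow> real) \<Rightarrow> bool" where
  "in_L u \<longleftrightarrow> (\<exists>S. open S \<and> closure sqD \<subseteq> S \<and> smooth_on S u) \<and>
               (\<forall>p\<in>frontier sqD. u p = 0)"

end

theory Submission
  imports Defs
begin

inductive T :: "(real \<Rightarrow> real) \<Rightarrow> bool" where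
  T_ec: "T (\<lambda>x. exp (c*x) * cos (d*x))"
| T_es: "T (\<lambda>x. exp (c*x) * sin (d*x))"
| T_add: "T f \<Longrightarrow> T g \<Longrightarrow> T (\<lambda>x. f x + g x)"
| T_scale: "T f \<Longrightarrow> T (\<lambda>x. k * f x)"

lemma T_deriv: "T f \<Longrightarrow> \<exists>f'. T f' \<and> (\<forall>x. (f has_real_derivative f' x) (at x))"
proof (induction rule: T.induct)
  case (T_ec c d)
  show ?case
    apply (rule exI[of _ "\<lambda>x. c * (exp (c*x) * cos (d*x)) + (-d) * (exp (c*x) * sin (d*x))"])
    apply (intro conjI allI T.intros)
    apply (auto intro!: derivative_eq_intros simp: algebra_simps)
    done
next
  case (T_es c d)
  show ?case
    apply (rule exI[of _ "\<lambda>x. c * (exp (c*x) * sin (d*x)) + d * (exp (c*x) * cos (d*x))"])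
    apply (intro conjI allI T.intros)
    apply (auto intro!: derivative_eq_intros simp: algebra_simps)
    done
next
  case (T_add f g)
  then obtain f' g' where "T f'" "T g'" "\<And>x. (f has_real_derivative f' x) (at x)"
    "\<And>x. (g has_real_derivative g' x) (at x)" by blast
  then show ?case
    by (intro exI[of _ "\<lambda>x. f' x + g' x"]) (auto intro: T.intros DERIV_add)
next
  case (T_scale f k)
  then obtain f' where "T f'" "\<And>x. (f has_real_derivative f' x) (at x)" by blast
  then show ?case
    by (intro exI[of _ "\<lambda>x. k * f' x"]) (auto intro: T.intros DERIV_cmult)
qed

inductive N :: "(real \<times> real \<Rightarrow> real) \<Rightarrow> bool" where
  N_prod: "T h \<Longrightarrow> T k \<Longrightarrow> N (\<lambda>p. h (fst p) * k (snd p))"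
| N_add: "N f \<Longrightarrow> N g \<Longrightarrow> N (\<lambda>p. f p + g p)"

lemma T_cont: "T h \<Longrightarrow> continuous_on UNIV h"
proof -
  assume "T h"
  then obtain h' where "\<And>x. (h has_real_derivative h' x) (at x)" using T_deriv by blast
  then show ?thesis
    by (meson DERIV_isCont continuous_at_imp_continuous_on)
qed

lemma N_props:
  "N f \<Longrightarrow> (\<forall>p. (\<lambda>s. f (s, snd p)) differentiable (at (fst p)) \<and>
                 (\<lambda>t. f (fst p, t)) differentiable (at (snd p))) \<and>
           continuous_on UNIV f \<and> N (partial_x f) \<and> N (partial_y f)"
proof (induction rule: N.induct)
  case (N_prod h k)
  obtain h' where h': "T h'" "\<And>x. (h has_real_derivative h' x) (at x)" using T_deriv N_prod by blast
  obtain k' where k': "T k'" "\<And>x. (k has_real_derivative k' x) (at x)" using T_deriv N_prod by blast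
  have dx: "\<And>x y. ((\<lambda>s. h s * k y) has_real_derivative h' x * k y) (at x)"
    using h' by (auto intro!: derivative_eq_intros)
  have dy: "\<And>x y. ((\<lambda>t. h x * k t) has_real_derivative h x * k' y) (at y)"
    using k' by (auto intro!: derivative_eq_intros)
  have px: "partial_x (\<lambda>p. h (fst p) * k (snd p)) = (\<lambda>p. h' (fst p) * k (snd p))"
    unfolding partial_x_def using dx by (auto intro!: DERIV_imp_deriv)
  have py: "partial_y (\<lambda>p. h (fst p) * k (snd p)) = (\<lambda>p. h (fst p) * k' (snd p))"
    unfolding partial_y_def using dy by (auto intro!: DERIV_imp_deriv)
  have c: "continuous_on UNIV (\<lambda>p. h (fst p) * k (snd p))"
    using T_cont[OF N_prod(1)] T_cont[OF N_prod(2)]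
    by (intro continuous_on_mult continuous_on_compose2[where f=fst, of UNIV h UNIV]
         continuous_on_compose2[where f=snd, of UNIV k UNIV]) (auto intro: continuous_intros)
  have "\<forall>p. (\<lambda>s. h s * k (snd p)) differentiable (at (fst p)) \<and>
                 (\<lambda>t. h (fst p) * k t) differentiable (at (snd p))"
    using dx dy unfolding real_differentiable_def by blast
  then show ?case
    using c px py h'(1) k'(1) N_prod
    by (auto intro: N.intros)
next
  case (N_add f g)
  have dfx: "\<And>x y. ((\<lambda>s. f (s, y)) has_real_derivative partial_x f (x,y)) (at x)"
    using N_add.IH(1) unfolding partial_x_def
    by (metis DERIV_deriv_iff_real_differentiable fst_conv snd_conv)
  have dgx: "\<And>x y. ((\<lambda>s. g (s, y)) has_real_derivative partial_x g (x,y)) (at x)"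
    using N_add.IH(2) unfolding partial_x_def
    by (metis DERIV_deriv_iff_real_differentiable fst_conv snd_conv)
  have dfy: "\<And>x y. ((\<lambda>t. f (x, t)) has_real_derivative partial_y f (x,y)) (at y)"
    using N_add.IH(1) unfolding partial_y_def
    by (metis DERIV_deriv_iff_real_differentiable fst_conv snd_conv)
  have dgy: "\<And>x y. ((\<lambda>t. g (x, t)) has_real_derivative partial_y g (x,y)) (at y)"
    using N_add.IH(2) unfolding partial_y_def
    by (metis DERIV_deriv_iff_real_differentiable fst_conv snd_conv)
  have sx: "\<And>x y. ((\<lambda>s. f (s, y) + g (s, y)) has_real_derivative partial_x f (x,y) + partial_x g (x,y)) (at x)"
    using dfx dgx by (rule DERIV_add)
  have sy: "\<And>x y. ((\<lambda>t. f (x, t) + g (x, t)) has_real_derivative partial_y f (x,y) + partial_y g (x,y)) (at y)"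
    using dfy dgy by (rule DERIV_add)
  have px: "partial_x (\<lambda>p. f p + g p) = (\<lambda>p. partial_x f p + partial_x g p)"
    apply (rule ext) subgoal for p using sx[where x="fst p" and y="snd p"]
      unfolding partial_x_def by (auto intro!: DERIV_imp_deriv) done
  have py: "partial_y (\<lambda>p. f p + g p) = (\<lambda>p. partial_y f p + partial_y g p)"
    apply (rule ext) subgoal for p using sy[where x="fst p" and y="snd p"]
      unfolding partial_y_def by (auto intro!: DERIV_imp_deriv) done
  have "\<forall>p. (\<lambda>s. f (s, snd p) + g (s, snd p)) differentiable (at (fst p)) \<and>
                 (\<lambda>t. f (fst p, t) + g (fst p, t)) differentiable (at (snd p))"
    using sx sy unfolding real_differentiable_def by blast
  then show ?case
    using px py N_add.IH
    by (auto intro: N.intros continuous_on_add)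
qed

lemma N_iter: "N f \<Longrightarrow> N (iter_partial bs f)"
  by (induction bs) (auto dest: N_props)

lemma N_smooth: "N f \<Longrightarrow> smooth_on UNIV f"
  unfolding smooth_on_def using N_iter N_props by blast

lemma lap2:
  assumes P: "\<And>x. (P has_real_derivative P1 x) (at x)" "\<And>x. (P1 has_real_derivative P2 x) (at x)"
      and Q: "\<And>x. (Q has_real_derivative Q1 x) (at x)" "\<And>x. (Q1 has_real_derivative Q2 x) (at x)"
      and R: "\<And>x. (R has_real_derivative R1 x) (at x)" "\<And>x. (R1 has_real_derivative R2 x) (at x)"
      and S: "\<And>x. (S has_real_derivative S1 x) (at x)" "\<And>x. (S1 has_real_derivative S2 x) (at x)"
  shows "laplacian (\<lambda>p. P (fst p) * Q (snd p) + R (fst p) * S (snd p)) p =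
     P2 (fst p) * Q (snd p) + P (fst p) * Q2 (snd p) + R2 (fst p) * S (snd p) + R (fst p) * S2 (snd p)"
proof -
  have gx: "\<And>A A1 B C C1 D. (\<And>x. (A has_real_derivative A1 x) (at x)) \<Longrightarrow> (\<And>x. (C has_real_derivative C1 x) (at x)) \<Longrightarrow>
     partial_x (\<lambda>p. A (fst p) * B (snd p) + C (fst p) * D (snd p)) = (\<lambda>p. A1 (fst p) * B (snd p) + C1 (fst p) * D (snd p))"
    unfolding partial_x_def by (rule ext) (auto intro!: DERIV_imp_deriv derivative_eq_intros)
  have gy: "\<And>A B B1 C D D1. (\<And>x. (B has_real_derivative B1 x) (at x)) \<Longrightarrow> (\<And>x. (D has_real_derivative D1 x) (at x)) \<Longrightarrow>
     partial_y (\<lambda>p. A (fst p) * B (snd p) + C (fst p) * D (snd p)) = (\<lambda>p. A (fst p) * B1 (snd p) + C (fst p) * D1 (snd p))"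
    unfolding partial_y_def by (rule ext) (auto intro!: DERIV_imp_deriv derivative_eq_intros)
  show ?thesis unfolding laplacian_def
    by (simp add: gx[OF P(1) R(1)] gx[OF P(2) R(2)] gy[OF Q(1) S(1)] gy[OF Q(2) S(2)])
qed

theorem theorem4:
  shows "\<exists>u v. in_L u \<and> in_L v \<and>
           (\<exists>p\<in>closure sqD. v p \<noteq> u p) \<and> (\<exists>p\<in>closure sqD. v p \<noteq> - u p) \<and>
           (\<forall>p\<in>sqD. u p * laplacian u p = v p * laplacian v p)"
proof -
  define \<alpha> :: real where "\<alpha> = sqrt (7/2)"
  have aa: "\<alpha> * \<alpha> = 7/2" unfolding \<alpha>_def by simp
  define a where "a = (\<lambda>y. exp (\<alpha>*y) * cos y)"
  define a1 where "a1 = (\<lambda>y. exp (\<alpha>*y) * (\<alpha> * cos y - sin y))"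
  define a2 where "a2 = (\<lambda>y. exp (\<alpha>*y) * ((\<alpha>*\<alpha> - 1) * cos y - 2*\<alpha> * sin y))"
  define b where "b = (\<lambda>y. exp (-\<alpha>*y) * cos y)"
  define b1 where "b1 = (\<lambda>y. exp (-\<alpha>*y) * (-\<alpha> * cos y - sin y))"
  define b2 where "b2 = (\<lambda>y. exp (-\<alpha>*y) * ((\<alpha>*\<alpha> - 1) * cos y + 2*\<alpha> * sin y))"
  have da: "\<And>x. (a has_real_derivative a1 x) (at x)" "\<And>x. (a1 has_real_derivative a2 x) (at x)"
    unfolding a_def a1_def a2_def by (auto intro!: derivative_eq_intros simp: algebra_simps)
  have db: "\<And>x. (b has_real_derivative b1 x) (at x)" "\<And>x. (b1 has_real_derivative b2 x) (at x)"
    unfolding b_def b1_def b2_def by (auto intro!: derivative_eq_intros simp: algebra_simps)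
  have dc: "\<And>x. (cos has_real_derivative (\<lambda>x. - sin x) x) (at x)"
      "\<And>x. ((\<lambda>x. - sin x) has_real_derivative (\<lambda>x. - cos x) x) (at x)"
    by (auto intro!: derivative_eq_intros)
  have ds: "\<And>x. ((\<lambda>x. sin (2*x)) has_real_derivative (\<lambda>x. 2 * cos (2*x)) x) (at x)"
      "\<And>x. ((\<lambda>x. 2 * cos (2*x)) has_real_derivative (\<lambda>x. -4 * sin (2*x)) x) (at x)"
    by (auto intro!: derivative_eq_intros)
  have dm: "\<And>x. ((\<lambda>x. - sin (2*x)) has_real_derivative (\<lambda>x. -2 * cos (2*x)) x) (at x)"
      "\<And>x. ((\<lambda>x. -2 * cos (2*x)) has_real_derivative (\<lambda>x. 4 * sin (2*x)) x) (at x)"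
    by (auto intro!: derivative_eq_intros)
  define u where "u = (\<lambda>p::real\<times>real. cos (fst p) * a (snd p) + sin (2 * fst p) * b (snd p))"
  define v where "v = (\<lambda>p::real\<times>real. cos (fst p) * a (snd p) + (- sin (2 * fst p)) * b (snd p))"
  have lu: "\<And>p. laplacian u p = - cos (fst p) * a (snd p) + cos (fst p) * a2 (snd p)
         + (-4 * sin (2 * fst p)) * b (snd p) + sin (2 * fst p) * b2 (snd p)"
    unfolding u_def by (rule lap2[OF dc da ds db])
  have lv: "\<And>p. laplacian v p = - cos (fst p) * a (snd p) + cos (fst p) * a2 (snd p)
         + (4 * sin (2 * fst p)) * b (snd p) + (- sin (2 * fst p)) * b2 (snd p)"
    unfolding v_def by (rule lap2[OF dc da dm db])
  have key: "\<And>y. a y * b2 y + a2 y * b y = 5 * a y * b y"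
  proof -
    fix y
    have e: "exp (\<alpha>*y) * exp (-\<alpha>*y) = 1" by (simp add: exp_minus[symmetric] mult_exp_exp)
    show "a y * b2 y + a2 y * b y = 5 * a y * b y"
      unfolding a_def a2_def b_def b2_def
      using e aa by (simp add: algebra_simps)
  qed
  have eq: "\<forall>p\<in>sqD. u p * laplacian u p = v p * laplacian v p"
  proof
    fix p :: "real \<times> real"
    obtain x y where p: "p = (x,y)" by (cases p)
    have k: "a y * b2 y + a2 y * b y = 5 * a y * b y" by (rule key)
    show "u p * laplacian u p = v p * laplacian v p"
      unfolding lu lv unfolding u_def v_def p fst_conv snd_conv
      using k by algebra
  qed
  have T1: "T a" unfolding a_def using T_ec[of \<alpha> 1] by simp
  have T2: "T b" unfolding b_def using T_ec[of "-\<alpha>" 1] by simp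
  have T3: "T cos" using T_ec[of 0 1] by simp
  have T4: "T (\<lambda>x. sin (2*x))" using T_es[of 0 2] by simp
  have T5: "T (\<lambda>x. - sin (2*x))" using T_scale[OF T4, of "-1"] by simp
  have Nu: "N u" unfolding u_def by (intro N.intros T1 T2 T3 T4)
  have Nv: "N v" unfolding v_def by (intro N.intros T1 T2 T3 T5)
  have cl: "closure sqD = {-pi/2..pi/2} \<times> {-pi/2..pi/2}"
    unfolding sqD_def closure_Times by simp
  have int: "interior sqD = sqD" unfolding sqD_def by (simp add: open_Times interior_open)
  have bd: "\<And>x y. (x,y) \<in> frontier sqD \<Longrightarrow> cos x = 0 \<or> cos y = 0"
  proof -
    fix x y assume "(x,y) \<in> frontier sqD"
    then have "x \<in> {-pi/2..pi/2}" "y \<in> {-pi/2..pi/2}" "(x,y) \<notin> sqD"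
      unfolding frontier_def cl int by auto
    then have "x = pi/2 \<or> x = -pi/2 \<or> y = pi/2 \<or> y = -pi/2"
      unfolding sqD_def by auto
    moreover have c1: "cos (pi/2) = 0" "cos (-pi/2) = 0" by (simp_all add: minus_divide_left[symmetric])
    ultimately show "cos x = 0 \<or> cos y = 0" by metis
  qed
  have zu: "\<forall>p\<in>frontier sqD. u p = 0"
  proof
    fix p assume "p \<in> frontier sqD"
    then obtain x y where p: "p = (x,y)" "(x,y) \<in> frontier sqD" by (cases p) auto
    from bd[OF p(2)] show "u p = 0" unfolding u_def p a_def b_def by (auto simp: sin_double)
  qed
  have zv: "\<forall>p\<in>frontier sqD. v p = 0"
  proof
    fix p assume "p \<in> frontier sqD"
    then obtain x y where p: "p = (x,y)" "(x,y) \<in> frontier sqD" by (cases p) auto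
    from bd[OF p(2)] show "v p = 0" unfolding v_def p a_def b_def by (auto simp: sin_double)
  qed
  have Lu: "in_L u" unfolding in_L_def using N_smooth[OF Nu] zu by auto
  have Lv: "in_L v" unfolding in_L_def using N_smooth[OF Nv] zv by auto
  have p1: "(pi/4, 0) \<in> closure sqD" unfolding cl using pi_gt_zero by auto
  have p0: "(0, 0) \<in> closure sqD" unfolding cl using pi_gt_zero by auto
  have s1: "sin (2 * (pi/4)) = 1" by simp
  have n1: "v (pi/4, 0) \<noteq> u (pi/4, 0)" unfolding u_def v_def a_def b_def using s1 by simp
  have n2: "v (0, 0) \<noteq> - u (0, 0)" unfolding u_def v_def a_def b_def by simp
  show ?thesis using Lu Lv n1 n2 p1 p0 eq by blast
qed

end
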